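(* Let $p$ be a prime and $P=C_p\wr C_p$ (the regular wreath product of two cyclic groups of order $p$). Then $\eta_i(P)=Z_i(P)$ for all $i\ge 0$, where $Z_i(P)$ is the $i$-th term of the upper central series.
   Context: For a finite $p$-group $P$, a normal subgroup $N$ of $P$ is powerfully embedded in $P$ if $[N,P]\le N^p$ when $p$ is odd, and $[N,P]\le N^4$ when $p=2$ (here $N^{k}$ denotes the subgroup generated by all $k$-th powers of elements of $N$). $\eta(P)$ denotes the largest powerfully embedded subgroup of $P$ (the product of all powerfully embedded subgroups of $P$). The upper $\eta$-series of $P$ is defined by $\eta_0(P)=1$ and $\eta_{i+1}(P)/\eta_i(P)=\eta(P/\eta_i(P))$ for $i\ge 0$. *)

theory Defs
  imports "HOL-Algebra.Algebra"
begin

definition comm_subgroup :: "('a,'b) monoid_scheme \<Rightarrow> 'a set \<Rightarrow> 'a set \<Rightarrow> 'a set" where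
  "comm_subgroup G N H = generate G
     (\<Union>x\<in>N. \<Union>y\<in>H. {inv\<^bsub>G\<^esub> x \<otimes>\<^bsub>G\<^esub> inv\<^bsub>G\<^esub> y \<otimes>\<^bsub>G\<^esub> x \<otimes>\<^bsub>G\<^esub> y})"

definition power_subgroup :: "('a,'b) monoid_scheme \<Rightarrow> 'a set \<Rightarrow> nat \<Rightarrow> 'a set" where
  "power_subgroup G N k = generate G ((\<lambda>x. x [^]\<^bsub>G\<^esub> k) ` N)"

definition powerfully_embedded :: "nat \<Rightarrow> ('a,'b) monoid_scheme \<Rightarrow> 'a set \<Rightarrow> bool" where
  "powerfully_embedded p G N \<longleftrightarrow> N \<lhd> G \<and>
     comm_subgroup G N (carrier G) \<subseteq> power_subgroup G N (if p = 2 then 4 else p)"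

definition eta :: "nat \<Rightarrow> ('a,'b) monoid_scheme \<Rightarrow> 'a set" where
  "eta p G = generate G (\<Union>{N. powerfully_embedded p G N})"

fun eta_series :: "nat \<Rightarrow> ('a,'b) monoid_scheme \<Rightarrow> nat \<Rightarrow> 'a set" where
  "eta_series p G 0 = {\<one>\<^bsub>G\<^esub>}"
| "eta_series p G (Suc i) =
     {x \<in> carrier G. eta_series p G i #>\<^bsub>G\<^esub> x \<in> eta p (G Mod eta_series p G i)}"

definition center :: "('a,'b) monoid_scheme \<Rightarrow> 'a set" where
  "center G = {x \<in> carrier G. \<forall>y\<in>carrier G. x \<otimes>\<^bsub>G\<^esub> y = y \<otimes>\<^bsub>G\<^esub> x}"

fun upper_central :: "('a,'b) monoid_scheme \<Rightarrow> nat \<Rightarrow> 'a set" where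
  "upper_central G 0 = {\<one>\<^bsub>G\<^esub>}"
| "upper_central G (Suc i) =
     {x \<in> carrier G. upper_central G i #>\<^bsub>G\<^esub> x \<in> center (G Mod upper_central G i)}"

text \<open>The regular wreath product C_p wr C_p = (C_p)^p \<rtimes> C_p, with C_p = Z/pZ realised
  as {0..<p} under addition mod p; the base group is the group of functions
  {0..<p} \<rightarrow> {0..<p}, and the top group acts by regular (cyclic shift) permutation of
  coordinates: (f,a)(g,b) = (f + a.g, a+b) where (a.g)(i) = g(i+a).\<close>
definition wreath_Cp :: "nat \<Rightarrow> ((nat \<Rightarrow> nat) \<times> nat) monoid" where
  "wreath_Cp p = \<lparr> carrier = ({..<p} \<rightarrow>\<^sub>E {..<p}) \<times> {..<p},
     monoid.mult = (\<lambda>(f,a) (g,b). ((\<lambda>i\<in>{..<p}. (f i + g ((i + a) mod p)) mod p), (a + b) mod p)),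
     one = ((\<lambda>i\<in>{..<p}. 0), 0) \<rparr>"

end

theory Submission
  imports Defs
begin

lemma W_carrier: "carrier (wreath_Cp p) = ({..<p} \<rightarrow>\<^sub>E {..<p}) \<times> {..<p}"
  by (simp add: wreath_Cp_def)
lemma W_one: "\<one>\<^bsub>wreath_Cp p\<^esub> = ((\<lambda>i\<in>{..<p}. 0), 0)"
  by (simp add: wreath_Cp_def)
lemma W_mult: "(f,a) \<otimes>\<^bsub>wreath_Cp p\<^esub> (g,b) = ((\<lambda>i\<in>{..<p}. (f i + g ((i + a) mod p)) mod p), (a + b) mod p)"
  by (simp add: wreath_Cp_def)

lemma W_group:
  assumes p: "p > 0"
  shows "group (wreath_Cp p)"
proof (rule groupI)
  fix x y assume "x \<in> carrier (wreath_Cp p)" "y \<in> carrier (wreath_Cp p)"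
  then show "x \<otimes>\<^bsub>wreath_Cp p\<^esub> y \<in> carrier (wreath_Cp p)"
    using p by (cases x, cases y) (auto simp: W_carrier W_mult)
next
  show "\<one>\<^bsub>wreath_Cp p\<^esub> \<in> carrier (wreath_Cp p)" using p by (auto simp: W_carrier W_one)
next
  fix x y z assume xc: "x \<in> carrier (wreath_Cp p)" and yc: "y \<in> carrier (wreath_Cp p)"
     and zc: "z \<in> carrier (wreath_Cp p)"
  obtain f a where x: "x = (f,a)" by (cases x)
  obtain g b where y: "y = (g,b)" by (cases y)
  obtain h c where z: "z = (h,c)" by (cases z)
  have e: "(i + (a + b) mod p) mod p = ((i + a) mod p + b) mod p" for i
    by (simp add: mod_simps add.assoc)
  show "x \<otimes>\<^bsub>wreath_Cp p\<^esub> y \<otimes>\<^bsub>wreath_Cp p\<^esub> z = x \<otimes>\<^bsub>wreath_Cp p\<^esub> (y \<otimes>\<^bsub>wreath_Cp p\<^esub> z)"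
    using p by (auto simp: x y z W_mult e mod_simps add.assoc intro!: ext)
next
  fix x assume "x \<in> carrier (wreath_Cp p)"
  then show "\<one>\<^bsub>wreath_Cp p\<^esub> \<otimes>\<^bsub>wreath_Cp p\<^esub> x = x"
    by (cases x) (auto simp: W_carrier W_one W_mult PiE_iff extensional_def intro!: ext)
next
  fix x assume xc: "x \<in> carrier (wreath_Cp p)"
  obtain f a where x: "x = (f,a)" by (cases x)
  define b where "b = (p - a) mod p"
  define g where "g = (\<lambda>i\<in>{..<p}. (p - f ((i + b) mod p)) mod p)"
  have fl: "f i < p" if "i < p" for i using xc that by (auto simp: x W_carrier)
  have "(g,b) \<in> carrier (wreath_Cp p)" using p by (auto simp: W_carrier g_def b_def)
  moreover have "(g,b) \<otimes>\<^bsub>wreath_Cp p\<^esub> x = \<one>\<^bsub>wreath_Cp p\<^esub>"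
  proof -
    have "((p - f ((i + b) mod p)) mod p + f ((i + b) mod p)) mod p = 0" for i
      using fl[of "(i+b) mod p"] p
      by (metis add_diff_inverse_nat le_add_diff_inverse2 less_imp_le_nat mod_add_left_eq mod_less_divisor mod_self not_less)
    moreover have "(b + a) mod p = 0" using xc p by (auto simp: x W_carrier b_def mod_simps)
    ultimately show ?thesis by (auto simp: x W_mult W_one g_def intro!: ext)
  qed
  ultimately show "\<exists>y\<in>carrier (wreath_Cp p). y \<otimes>\<^bsub>wreath_Cp p\<^esub> x = \<one>\<^bsub>wreath_Cp p\<^esub>" by blast
qed

lemma W_pow:
  assumes p: "p > 0" and x: "(f,a) \<in> carrier (wreath_Cp p)"
  shows "(f,a) [^]\<^bsub>wreath_Cp p\<^esub> n = ((\<lambda>i\<in>{..<p}. (\<Sum>j<n. f ((i + j*a) mod p)) mod p), (n*a) mod p)"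
proof (induction n)
  case 0
  then show ?case by (auto simp: W_one intro!: ext)
next
  case (Suc n)
  have e: "(i + (n * a) mod p) mod p = (i + n*a) mod p" for i by (simp add: mod_simps)
  have e2: "((n * a) mod p + a) mod p = (a + n * a) mod p" by (simp add: mod_simps add.commute)
  show ?case using p
    by (auto simp: Suc W_mult e e2 mod_simps add.commute intro!: ext)
qed

definition Kc :: "nat \<Rightarrow> ((nat \<Rightarrow> nat) \<times> nat) set" where
  "Kc p = {((\<lambda>i\<in>{..<p}. c), 0) | c. c < p}"

lemma W_pow_zero:
  assumes p: "p > 0" and x: "(f,0) \<in> carrier (wreath_Cp p)"
  shows "(f,0) [^]\<^bsub>wreath_Cp p\<^esub> p = \<one>\<^bsub>wreath_Cp p\<^esub>"
proof -
  have "(f,0) [^]\<^bsub>wreath_Cp p\<^esub> p = ((\<lambda>i\<in>{..<p}. (\<Sum>j<p. f ((i + j*0) mod p)) mod p), (p*0) mod p)"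
    by (rule W_pow[OF p x])
  also have "\<dots> = \<one>\<^bsub>wreath_Cp p\<^esub>" by (auto simp: W_one intro!: ext)
  finally show ?thesis .
qed

lemma sum_rotate:
  fixes p :: nat
  assumes p: "Factorial_Ring.prime p" and a: "0 < a" "a < p" and i: "i < p"
  shows "(\<Sum>j<p. f ((i + j*a) mod p)) = (\<Sum>k<p. f k)"
proof -
  define h where "h = (\<lambda>j. (i + j*a) mod p)"
  have p0: "p > 0" using p prime_gt_0_nat by blast
  have inj: "inj_on h {..<p}"
  proof (rule inj_onI)
    fix j j' assume j: "j \<in> {..<p}" and j': "j' \<in> {..<p}" and eq: "h j = h j'"
    have key: "False" if "u < v" "v < p" "(i + u*a) mod p = (i + v*a) mod p" for u v
    proof -
      have "p dvd (i + v*a) - (i + u*a)" using that(3) mod_eq_dvd_iff_nat[of "i+u*a" "i+v*a" p]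
        using that(1) by simp
      moreover have "(i + v*a) - (i + u*a) = (v - u) * a" by (simp add: diff_mult_distrib)
      ultimately have "p dvd (v - u) * a" by simp
      then have "p dvd (v - u) \<or> p dvd a" using p prime_dvd_mult_iff by blast
      then show False using that a by (auto dest: dvd_imp_le)
    qed
    show "j = j'" using key[of j j'] key[of j' j] j j' eq by (force simp: h_def)
  qed
  have "h ` {..<p} \<subseteq> {..<p}" using p0 by (auto simp: h_def)
  then have img: "h ` {..<p} = {..<p}" using inj by (simp add: endo_inj_surj)
  have "(\<Sum>k<p. f k) = sum f (h ` {..<p})" by (simp add: img)
  also have "\<dots> = (\<Sum>j<p. f (h j))" using inj by (simp add: sum.reindex)
  finally show ?thesis by (simp add: h_def)
qed

lemma W_pow_K:
  assumes p: "Factorial_Ring.prime p" and x: "x \<in> carrier (wreath_Cp p)"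
  shows "x [^]\<^bsub>wreath_Cp p\<^esub> p \<in> Kc p"
proof -
  have p0: "p > 0" using p prime_gt_0_nat by blast
  obtain f a where xe: "x = (f,a)" by (cases x)
  have a: "a < p" using x by (simp add: xe W_carrier)
  show ?thesis
  proof (cases "a = 0")
    case True
    then show ?thesis using W_pow_zero[OF p0] x p0 by (auto simp: xe Kc_def W_one)
  next
    case False
    have "x [^]\<^bsub>wreath_Cp p\<^esub> p = ((\<lambda>i\<in>{..<p}. (\<Sum>k<p. f k) mod p), 0)"
    proof -
      have "\<forall>i<p. (\<Sum>j<p. f ((i + j*a) mod p)) = (\<Sum>k<p. f k)"
        using sum_rotate[OF p _ a] False by blast
      then show ?thesis using W_pow[OF p0, of f a p] x by (auto simp: xe intro!: ext)
    qed
    then show ?thesis using p0 by (auto simp: Kc_def)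
  qed
qed


lemma Kc_center:
  assumes p0: "p > 0" and k: "k \<in> Kc p" and y: "y \<in> carrier (wreath_Cp p)"
  shows "k \<otimes>\<^bsub>wreath_Cp p\<^esub> y = y \<otimes>\<^bsub>wreath_Cp p\<^esub> k"
proof -
  obtain c where kc: "k = ((\<lambda>i\<in>{..<p}. c), 0)" "c < p" using k by (auto simp: Kc_def)
  obtain g b where ye: "y = (g,b)" by (cases y)
  have g: "\<And>i. i < p \<Longrightarrow> g i < p" and b: "b < p" using y by (auto simp: ye W_carrier)
  show ?thesis using p0 g b by (auto simp: kc ye W_mult add.commute intro!: ext)
qed

lemma Kc_sub: "Kc p \<subseteq> carrier (wreath_Cp p)"
  by (auto simp: Kc_def W_carrier split: if_splits)

lemma Kc_subgroup:
  assumes p0: "p > 0"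
  shows "subgroup (Kc p) (wreath_Cp p)"
proof -
  interpret group "wreath_Cp p" using W_group[OF p0] .
  show ?thesis
  proof (rule subgroupI)
    show "Kc p \<subseteq> carrier (wreath_Cp p)" by (rule Kc_sub)
    show "Kc p \<noteq> {}" using p0 by (auto simp: Kc_def)
  next
    fix k assume k: "k \<in> Kc p"
    then obtain c where kc: "k = ((\<lambda>i\<in>{..<p}. c), 0)" "c < p" by (auto simp: Kc_def)
    define k' where "k' = ((\<lambda>i\<in>{..<p}. (p - c) mod p), (0::nat))"
    have k'K: "k' \<in> Kc p" using p0 by (auto simp: Kc_def k'_def)
    have pc: "p - c + c = p" using kc(2) by simp
    have "k' \<otimes>\<^bsub>wreath_Cp p\<^esub> k = \<one>\<^bsub>wreath_Cp p\<^esub>"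
      using kc(2) p0 pc by (auto simp: k'_def kc W_mult W_one mod_simps pc intro!: ext)
    then have "inv\<^bsub>wreath_Cp p\<^esub> k = k'"
      using inv_equality k'K k Kc_sub by blast
    then show "inv\<^bsub>wreath_Cp p\<^esub> k \<in> Kc p" using k'K by simp
  next
    fix k l assume "k \<in> Kc p" "l \<in> Kc p"
    then obtain c d where kc: "k = ((\<lambda>i\<in>{..<p}. c), 0)" and ld: "l = ((\<lambda>i\<in>{..<p}. d), 0)"
      by (auto simp: Kc_def)
    have "k \<otimes>\<^bsub>wreath_Cp p\<^esub> l = ((\<lambda>i\<in>{..<p}. (c + d) mod p), 0)"
      using p0 by (auto simp: kc ld W_mult intro!: ext)
    then show "k \<otimes>\<^bsub>wreath_Cp p\<^esub> l \<in> Kc p" using p0 by (auto simp: Kc_def)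
  qed
qed

lemma W_noncomm:
  assumes p: "Factorial_Ring.prime p" and p2: "p \<noteq> 2"
    and x: "(f,a) \<in> carrier (wreath_Cp p)" and a: "a \<noteq> 0" and k: "k \<in> Kc p"
  shows "(f,a) \<otimes>\<^bsub>wreath_Cp p\<^esub> ((\<lambda>i\<in>{..<p}. if i = 0 then 1 else 0), 0)
    \<noteq> ((\<lambda>i\<in>{..<p}. if i = 0 then 1 else 0), 0) \<otimes>\<^bsub>wreath_Cp p\<^esub> (f,a) \<otimes>\<^bsub>wreath_Cp p\<^esub> k"
proof
  assume eq: "(f,a) \<otimes>\<^bsub>wreath_Cp p\<^esub> ((\<lambda>i\<in>{..<p}. if i = 0 then 1 else 0), 0)
    = ((\<lambda>i\<in>{..<p}. if i = 0 then 1 else 0), 0) \<otimes>\<^bsub>wreath_Cp p\<^esub> (f,a) \<otimes>\<^bsub>wreath_Cp p\<^esub> k"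
  have p1: "p > 2" using p p2 prime_ge_2_nat by (metis le_neq_implies_less)
  obtain c where kc: "k = ((\<lambda>i\<in>{..<p}. c), 0)" "c < p" using k by (auto simp: Kc_def)
  have ap: "a < p" using x by (simp add: W_carrier)
  let ?F = "\<lambda>i. (f i + (if (i + a) mod p = 0 then 1 else 0)) mod p"
  let ?G = "\<lambda>i. ((( if i = 0 then 1 else 0) + f i) mod p + c) mod p"
  have "\<And>i. i < p \<Longrightarrow> ?F i = ?G i"
  proof -
    fix i assume i: "i < p"
    have "fst ((f,a) \<otimes>\<^bsub>wreath_Cp p\<^esub> ((\<lambda>i\<in>{..<p}. if i = 0 then 1 else 0), 0)) i
      = fst (((\<lambda>i\<in>{..<p}. if i = 0 then 1 else 0), 0) \<otimes>\<^bsub>wreath_Cp p\<^esub> (f,a) \<otimes>\<^bsub>wreath_Cp p\<^esub> k) i"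
      using eq by simp
    then show "?F i = ?G i" using i p1 by (simp add: kc W_mult)
  qed
  from this[of 0] this[of "p - a"] have e1: "f 0 mod p = ((1 + f 0) mod p + c) mod p"
    and e2: "(f (p - a) + 1) mod p = (f (p-a) mod p + c) mod p"
    using a ap p1 by auto
  from e2 have "(f (p - a) + 1) mod p = (f (p-a) + c) mod p" by (simp add: mod_simps)
  then have "1 mod p = c mod p"
    by (smt (verit, best) add.assoc add_left_cancel nat_mod_eq_iff)
  then have c1: "c = 1" using p1 kc(2) by simp
  from e1 c1 have "f 0 mod p = (f 0 + 2) mod p" by (simp add: mod_simps add.commute)
  then have "p dvd 2" using mod_eq_dvd_iff_nat[of "f 0" "f 0 + 2" p] by simp
  then show False using p1 by (auto dest: dvd_imp_le)
qed


lemma (in group) cancel_l: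
  "x \<in> carrier G \<Longrightarrow> r \<in> carrier G \<Longrightarrow> x \<otimes> (inv x \<otimes> r) = r"
  "x \<in> carrier G \<Longrightarrow> r \<in> carrier G \<Longrightarrow> inv x \<otimes> (x \<otimes> r) = r"
  by (simp_all add: m_assoc[symmetric])

lemma (in group) commutator_split:
  assumes x: "x \<in> carrier G" and y: "y \<in> carrier G"
  shows "y \<otimes> x \<otimes> (inv x \<otimes> inv y \<otimes> x \<otimes> y) = x \<otimes> y"
  using x y by (simp add: m_assoc cancel_l)

lemma (in group) comm_of_commutator:
  assumes x: "x \<in> carrier G" and y: "y \<in> carrier G"
    and c: "inv x \<otimes> inv y \<otimes> x \<otimes> y = \<one>"
  shows "x \<otimes> y = y \<otimes> x"
  using commutator_split[OF x y] c x y by simp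

lemma (in group) center_subgroup: "subgroup (center G) G"
proof (rule subgroupI)
  show "center G \<subseteq> carrier G" by (auto simp: center_def)
  show "center G \<noteq> {}" by (auto simp: center_def)
next
  fix a assume a: "a \<in> center G"
  have ac: "a \<in> carrier G" using a by (simp add: center_def)
  have ca: "\<And>y. y \<in> carrier G \<Longrightarrow> a \<otimes> y = y \<otimes> a" using a by (simp add: center_def)
  have "inv a \<otimes> y = y \<otimes> inv a" if y: "y \<in> carrier G" for y
  proof -
    have "a \<otimes> (y \<otimes> inv a) = (a \<otimes> y) \<otimes> inv a" using ac y by (simp only: m_assoc inv_closed)
    also have "\<dots> = (y \<otimes> a) \<otimes> inv a" by (simp only: ca[OF y])
    also have "\<dots> = y" using ac y by (simp add: m_assoc)
    finally have h: "a \<otimes> (y \<otimes> inv a) = y" .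
    have "inv a \<otimes> y = inv a \<otimes> (a \<otimes> (y \<otimes> inv a))" by (simp only: h)
    also have "\<dots> = y \<otimes> inv a" using ac y by (simp add: cancel_l)
    finally show ?thesis .
  qed
  then show "inv a \<in> center G" using ac by (simp add: center_def)
next
  fix a b assume a: "a \<in> center G" and b: "b \<in> center G"
  have ac: "a \<in> carrier G" and bc: "b \<in> carrier G" using a b by (auto simp: center_def)
  have ca: "\<And>y. y \<in> carrier G \<Longrightarrow> a \<otimes> y = y \<otimes> a" using a by (simp add: center_def)
  have cb: "\<And>y. y \<in> carrier G \<Longrightarrow> b \<otimes> y = y \<otimes> b" using b by (simp add: center_def)
  have "a \<otimes> b \<otimes> y = y \<otimes> (a \<otimes> b)" if y: "y \<in> carrier G" for y
  proof -
    have "a \<otimes> b \<otimes> y = a \<otimes> (b \<otimes> y)" using y ac bc by (simp only: m_assoc)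
    also have "\<dots> = a \<otimes> (y \<otimes> b)" by (simp only: cb[OF y])
    also have "\<dots> = (a \<otimes> y) \<otimes> b" using y ac bc by (simp only: m_assoc)
    also have "\<dots> = (y \<otimes> a) \<otimes> b" by (simp only: ca[OF y])
    also have "\<dots> = y \<otimes> (a \<otimes> b)" using y ac bc by (simp only: m_assoc)
    finally show ?thesis .
  qed
  then show "a \<otimes> b \<in> center G" using ac bc by (simp add: center_def)
qed

lemma (in group) center_normal: "center G \<lhd> G"
proof -
  have "x \<otimes> h \<otimes> inv x \<in> center G" if "x \<in> carrier G" "h \<in> center G" for x h
  proof -
    have "x \<otimes> h = h \<otimes> x" using that by (simp add: center_def)
    then have "x \<otimes> h \<otimes> inv x = h \<otimes> x \<otimes> inv x" by simp
    also have "\<dots> = h" using that by (simp add: m_assoc center_def cancel_l)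
    finally have "x \<otimes> h \<otimes> inv x = h" .
    then show ?thesis using that by simp
  qed
  then show ?thesis using center_subgroup by (simp add: normal_inv_iff)
qed

lemma (in group) center_pe: "powerfully_embedded p G (center G)"
proof -
  have "comm_subgroup G (center G) (carrier G) \<subseteq> {\<one>}"
    unfolding comm_subgroup_def
  proof (rule generate_subgroup_incl[OF _ triv_subgroup])
    show "(\<Union>x\<in>center G. \<Union>y\<in>carrier G. {inv x \<otimes> inv y \<otimes> x \<otimes> y}) \<subseteq> {\<one>}"
    proof clarify
      fix x y assume x: "x \<in> center G" and y: "y \<in> carrier G"
      have xc: "x \<in> carrier G" using x by (simp add: center_def)
      have "x \<otimes> y = y \<otimes> x" using x y by (simp add: center_def)
      then have "inv x \<otimes> inv y \<otimes> x \<otimes> y = inv x \<otimes> inv y \<otimes> (y \<otimes> x)"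
        using xc y by (simp add: m_assoc)
      also have "\<dots> = \<one>" using xc y by (simp add: m_assoc cancel_l)
      finally show "inv x \<otimes> inv y \<otimes> x \<otimes> y = \<one>" .
    qed
  qed
  moreover have "\<one> \<in> power_subgroup G (center G) k" for k
    unfolding power_subgroup_def by (rule generate.one)
  ultimately show ?thesis unfolding powerfully_embedded_def using center_normal by blast
qed

lemma (in group) pe_central:
  assumes pe: "powerfully_embedded p G N"
    and pw: "\<forall>z\<in>N. z [^] (if p = 2 then 4 else (p::nat)) = \<one>"
  shows "N \<subseteq> center G"
proof -
  let ?e = "if p = 2 then 4 else (p::nat)"
  have Nn: "N \<lhd> G" using pe by (simp add: powerfully_embedded_def)
  have Nc: "N \<subseteq> carrier G" using normal_imp_subgroup[OF Nn] subgroup.subset by blast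
  have "power_subgroup G N ?e \<subseteq> {\<one>}"
    unfolding power_subgroup_def
    by (rule generate_subgroup_incl[OF _ triv_subgroup]) (use pw in auto)
  then have cs: "comm_subgroup G N (carrier G) \<subseteq> {\<one>}" using pe by (auto simp: powerfully_embedded_def)
  show ?thesis
  proof
    fix x assume x: "x \<in> N"
    have "x \<otimes> y = y \<otimes> x" if y: "y \<in> carrier G" for y
    proof -
      have "inv x \<otimes> inv y \<otimes> x \<otimes> y \<in> comm_subgroup G N (carrier G)"
        unfolding comm_subgroup_def using x y by (intro generate.incl) blast
      then have "inv x \<otimes> inv y \<otimes> x \<otimes> y = \<one>" using cs by blast
      then show ?thesis using comm_of_commutator x y Nc by blast
    qed
    then show "x \<in> center G" using x Nc by (auto simp: center_def)
  qed
qed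

lemma (in group) eta_center:
  assumes "\<And>N. powerfully_embedded p G N \<Longrightarrow> N \<subseteq> center G"
  shows "eta p G = center G"
proof
  show "eta p G \<subseteq> center G" unfolding eta_def
    by (rule generate_subgroup_incl[OF _ center_subgroup]) (use assms in blast)
  have "center G \<subseteq> \<Union>{N. powerfully_embedded p G N}" using center_pe by blast
  also have "\<dots> \<subseteq> eta p G" unfolding eta_def by (auto intro: generate.incl)
  finally show "center G \<subseteq> eta p G" .
qed

context normal
begin

lemma q_group: "group (G Mod H)" by (rule factorgroup_is_group)

lemma q_carrier: "x \<in> carrier G \<Longrightarrow> H #> x \<in> carrier (G Mod H)"
  by (simp add: carrier_FactGroup)

lemma q_surj: "Cx \<in> carrier (G Mod H) \<Longrightarrow> \<exists>x\<in>carrier G. Cx = H #> x"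
  by (auto simp: carrier_FactGroup)

lemma q_mult: "x \<in> carrier G \<Longrightarrow> y \<in> carrier G \<Longrightarrow>
  (H #> x) \<otimes>\<^bsub>G Mod H\<^esub> (H #> y) = H #> (x \<otimes> y)"
  by (simp add: rcos_sum)

lemma q_inv: "x \<in> carrier G \<Longrightarrow> inv\<^bsub>G Mod H\<^esub> (H #> x) = H #> (inv x)"
  by (simp add: inv_FactGroup q_carrier rcos_inv)

lemma q_one: "\<one>\<^bsub>G Mod H\<^esub> = H #> \<one>"
  by (simp add: subset)

lemma q_pow: "x \<in> carrier G \<Longrightarrow> (H #> x) [^]\<^bsub>G Mod H\<^esub> (n::nat) = H #> (x [^] n)"
  by (rule FactGroup_pow)

lemma q_trivial: "x \<in> H \<Longrightarrow> H #> x = \<one>\<^bsub>G Mod H\<^esub>"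
  by (simp add: rcos_const is_group)

lemma q_center: "x \<in> center G \<Longrightarrow> H #> x \<in> center (G Mod H)"
proof -
  assume x: "x \<in> center G"
  have xc: "x \<in> carrier G" using x by (simp add: center_def)
  have "(H #> x) \<otimes>\<^bsub>G Mod H\<^esub> Cy = Cy \<otimes>\<^bsub>G Mod H\<^esub> (H #> x)" if Cy: "Cy \<in> carrier (G Mod H)" for Cy
  proof -
    obtain y where y: "y \<in> carrier G" "Cy = H #> y" using q_surj[OF Cy] by blast
    have "x \<otimes> y = y \<otimes> x" using x y by (simp add: center_def)
    then show ?thesis using xc y q_mult by simp
  qed
  then show ?thesis using xc q_carrier by (simp add: center_def)
qed

lemma q_preimage_normal: "{x \<in> carrier G. H #> x \<in> center (G Mod H)} \<lhd> G"
proof -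
  interpret Q: group "G Mod H" by (rule q_group)
  have Zs: "subgroup (center (G Mod H)) (G Mod H)" by (rule Q.center_subgroup)
  let ?Z = "{x \<in> carrier G. H #> x \<in> center (G Mod H)}"
  have sub: "subgroup ?Z G"
  proof (rule subgroupI)
    show "?Z \<subseteq> carrier G" by auto
    have "H #> \<one> \<in> center (G Mod H)" using subgroup.one_closed[OF Zs] q_one by simp
    then show "?Z \<noteq> {}" by auto
  next
    fix a assume a: "a \<in> ?Z"
    then show "inv a \<in> ?Z" using subgroup.m_inv_closed[OF Zs, of "H #> a"] q_inv by auto
  next
    fix a b assume "a \<in> ?Z" "b \<in> ?Z"
    then show "a \<otimes> b \<in> ?Z" using subgroup.m_closed[OF Zs, of "H #> a" "H #> b"] q_mult by auto
  qed
  have "x \<otimes> h \<otimes> inv x \<in> ?Z" if x: "x \<in> carrier G" and h: "h \<in> ?Z" for x h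
  proof -
    have hc: "h \<in> carrier G" and hz: "H #> h \<in> center (G Mod H)" using h by auto
    have "H #> (x \<otimes> h \<otimes> inv x) = (H #> x) \<otimes>\<^bsub>G Mod H\<^esub> (H #> h) \<otimes>\<^bsub>G Mod H\<^esub> (H #> inv x)"
      using x hc by (simp add: rcos_sum)
    also have "\<dots> = (H #> h) \<otimes>\<^bsub>G Mod H\<^esub> (H #> x) \<otimes>\<^bsub>G Mod H\<^esub> (H #> inv x)"
      using hz x q_carrier by (simp add: center_def)
    also have "\<dots> = H #> (h \<otimes> x \<otimes> inv x)"
      using x hc by (simp add: rcos_sum)
    also have "\<dots> = H #> h" using x hc by (simp add: m_assoc)
    finally show ?thesis using hz x hc by simp
  qed
  then show ?thesis using sub by (simp add: normal_inv_iff)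
qed

lemma q_img_subgroup:
  assumes K: "subgroup K G"
  shows "subgroup ((\<lambda>k. H #> k) ` K) (G Mod H)"
proof -
  interpret Q: group "G Mod H" by (rule q_group)
  have Kc: "K \<subseteq> carrier G" using K subgroup.subset by blast
  show ?thesis
  proof (rule Q.subgroupI)
    show "(\<lambda>k. H #> k) ` K \<subseteq> carrier (G Mod H)" using Kc q_carrier by auto
    show "(\<lambda>k. H #> k) ` K \<noteq> {}" using subgroup.one_closed[OF K] by auto
  next
    fix a assume "a \<in> (\<lambda>k. H #> k) ` K"
    then obtain k where "k \<in> K" "a = H #> k" by blast
    then show "inv\<^bsub>G Mod H\<^esub> a \<in> (\<lambda>k. H #> k) ` K"
      using q_inv Kc subgroup.m_inv_closed[OF K] by auto
  next
    fix a b assume "a \<in> (\<lambda>k. H #> k) ` K" "b \<in> (\<lambda>k. H #> k) ` K"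
    then obtain k l where kl: "k \<in> K" "a = H #> k" "l \<in> K" "b = H #> l" by blast
    then have "a \<otimes>\<^bsub>G Mod H\<^esub> b = H #> (k \<otimes> l)" using Kc rcos_sum[of k l] by auto
    then show "a \<otimes>\<^bsub>G Mod H\<^esub> b \<in> (\<lambda>k. H #> k) ` K"
      using kl subgroup.m_closed[OF K] by auto
  qed
qed

end


lemma triv_rcos: "group G \<Longrightarrow> c \<in> carrier G \<Longrightarrow> {\<one>\<^bsub>G\<^esub>} #>\<^bsub>G\<^esub> c = {c}"
  by (simp add: r_coset_def monoid.l_one[OF group.is_monoid])

theorem lemma3p1:
  fixes p :: nat
  assumes "Factorial_Ring.prime p"
  shows "\<forall>i. eta_series p (wreath_Cp p) i = upper_central (wreath_Cp p) i"
proof -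
  note p = assms
  let ?W = "wreath_Cp p"
  let ?e = "if p = 2 then 4 else (p::nat)"
  have p0: "p > 0" using p prime_gt_0_nat by blast
  interpret W: group ?W using W_group[OF p0] .
  have Zn: "upper_central ?W i \<lhd> ?W" for i
  proof (induction i)
    case 0
    show ?case using W.triv_subgroup by (simp add: W.normal_inv_iff)
  next
    case (Suc i)
    then show ?case by (simp add: normal.q_preimage_normal)
  qed
  have KZ: "Kc p \<subseteq> upper_central ?W (Suc i)" for i
  proof
    fix k assume k: "k \<in> Kc p"
    have kc: "k \<in> carrier ?W" using k Kc_sub by blast
    have "k \<in> center ?W" using k kc Kc_center[OF p0 k] by (simp add: center_def)
    then show "k \<in> upper_central ?W (Suc i)" using normal.q_center[OF Zn[of i]] kc by simp
  qed
  have pow4: "x [^]\<^bsub>?W\<^esub> (4::nat) = \<one>\<^bsub>?W\<^esub>" if p2: "p = 2" and x: "x \<in> carrier ?W" for x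
  proof -
    have "x [^]\<^bsub>?W\<^esub> p \<in> Kc p" using W_pow_K[OF p x] .
    then obtain c where c: "x [^]\<^bsub>?W\<^esub> p = ((\<lambda>i\<in>{..<p}. c), 0)" "c < p" by (auto simp: Kc_def)
    have cc: "((\<lambda>i\<in>{..<p}. c), 0) \<in> carrier ?W" using c Kc_sub[of p] by (auto simp: Kc_def)
    have "x [^]\<^bsub>?W\<^esub> (4::nat) = (x [^]\<^bsub>?W\<^esub> p) [^]\<^bsub>?W\<^esub> p"
      using W.nat_pow_pow[OF x, of "2::nat" "2::nat"] p2 by simp
    also have "\<dots> = \<one>\<^bsub>?W\<^esub>" unfolding c(1) by (rule W_pow_zero[OF p0 cc])
    finally show ?thesis .
  qed
  have powZ: "x [^]\<^bsub>?W\<^esub> ?e \<in> upper_central ?W i"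
    if x: "x \<in> carrier ?W" and pi: "p = 2 \<or> i > 0" for x i
  proof (cases "p = 2")
    case True
    then show ?thesis using pow4[OF True x] subgroup.one_closed[OF normal_imp_subgroup[OF Zn[of i]]]
      by simp
  next
    case False
    then obtain j where j: "i = Suc j" using pi gr0_conv_Suc by auto
    show ?thesis using False W_pow_K[OF p x] KZ[of j] j by auto
  qed
  have etaZ: "eta p (?W Mod upper_central ?W i) = center (?W Mod upper_central ?W i)" for i
  proof -
    let ?Z = "upper_central ?W i"
    let ?Q = "?W Mod ?Z"
    interpret Zn: normal ?Z ?W using Zn .
    interpret Q: group ?Q by (rule Zn.q_group)
    show ?thesis
    proof (rule Q.eta_center)
      fix N assume pe: "powerfully_embedded p ?Q N"
      have Nn: "N \<lhd> ?Q" using pe by (simp add: powerfully_embedded_def)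
      have Nc: "N \<subseteq> carrier ?Q" using normal_imp_subgroup[OF Nn] subgroup.subset by blast
      show "N \<subseteq> center ?Q"
      proof (cases "p = 2 \<or> i > 0")
        case True
        have "\<forall>z\<in>N. z [^]\<^bsub>?Q\<^esub> ?e = \<one>\<^bsub>?Q\<^esub>"
        proof
          fix z assume "z \<in> N"
          then obtain x where x: "x \<in> carrier ?W" "z = ?Z #>\<^bsub>?W\<^esub> x"
            using Nc Zn.q_surj by blast
          show "z [^]\<^bsub>?Q\<^esub> ?e = \<one>\<^bsub>?Q\<^esub>"
            using x Zn.q_pow Zn.q_trivial powZ[OF x(1) True] by simp
        qed
        then show ?thesis by (rule Q.pe_central[OF pe])
      next
        case False
        then have p2: "p \<noteq> 2" and i0: "i = 0" by auto
        have Z1: "?Z = {\<one>\<^bsub>?W\<^esub>}" using i0 by simp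
        let ?KQ = "(\<lambda>k. ?Z #>\<^bsub>?W\<^esub> k) ` Kc p"
        have KQ: "subgroup ?KQ ?Q" by (rule Zn.q_img_subgroup[OF Kc_subgroup[OF p0]])
        have psub: "power_subgroup ?Q N p \<subseteq> ?KQ"
          unfolding power_subgroup_def
        proof (rule Q.generate_subgroup_incl[OF _ KQ])
          show "(\<lambda>x. x [^]\<^bsub>?Q\<^esub> p) ` N \<subseteq> ?KQ"
          proof clarify
            fix z assume "z \<in> N"
            then obtain x where x: "x \<in> carrier ?W" "z = ?Z #>\<^bsub>?W\<^esub> x"
              using Nc Zn.q_surj by blast
            then have "z [^]\<^bsub>?Q\<^esub> p = ?Z #>\<^bsub>?W\<^esub> (x [^]\<^bsub>?W\<^esub> p)" using Zn.q_pow by simp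
            then show "z [^]\<^bsub>?Q\<^esub> p \<in> ?KQ" using W_pow_K[OF p x(1)] by blast
          qed
        qed
        have zero: "snd x = 0" if z: "z \<in> N" and x: "x \<in> carrier ?W" and zx: "z = ?Z #>\<^bsub>?W\<^esub> x" for z x
        proof (rule ccontr)
          assume a: "snd x \<noteq> 0"
          obtain f a where xe: "x = (f,a)" by (cases x)
          define y where "y = ((\<lambda>i\<in>{..<p}. if i = 0 then 1 else (0::nat)), (0::nat))"
          have "p \<ge> 2" using p prime_ge_2_nat by blast
          then have y: "y \<in> carrier ?W" using p0 by (auto simp: y_def W_carrier)
          define c where "c = inv\<^bsub>?W\<^esub> x \<otimes>\<^bsub>?W\<^esub> inv\<^bsub>?W\<^esub> y \<otimes>\<^bsub>?W\<^esub> x \<otimes>\<^bsub>?W\<^esub> y"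
          have cc: "c \<in> carrier ?W" using x y by (simp add: c_def)
          let ?Y = "?Z #>\<^bsub>?W\<^esub> y"
          have "inv\<^bsub>?Q\<^esub> z \<otimes>\<^bsub>?Q\<^esub> inv\<^bsub>?Q\<^esub> ?Y \<otimes>\<^bsub>?Q\<^esub> z \<otimes>\<^bsub>?Q\<^esub> ?Y
             \<in> comm_subgroup ?Q N (carrier ?Q)"
            unfolding comm_subgroup_def using z Zn.q_carrier[OF y] by (intro generate.incl) blast
          also have "\<dots> \<subseteq> ?KQ" using pe psub p2 unfolding powerfully_embedded_def by (simp only: if_False) blast
          finally have "inv\<^bsub>?Q\<^esub> z \<otimes>\<^bsub>?Q\<^esub> inv\<^bsub>?Q\<^esub> ?Y \<otimes>\<^bsub>?Q\<^esub> z \<otimes>\<^bsub>?Q\<^esub> ?Y \<in> ?KQ" .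
          moreover have "inv\<^bsub>?Q\<^esub> z \<otimes>\<^bsub>?Q\<^esub> inv\<^bsub>?Q\<^esub> ?Y \<otimes>\<^bsub>?Q\<^esub> z \<otimes>\<^bsub>?Q\<^esub> ?Y
              = ?Z #>\<^bsub>?W\<^esub> c"
            using x y zx by (simp add: Zn.q_inv Zn.q_mult c_def del: mult_FactGroup)
          ultimately obtain k where k: "k \<in> Kc p" "?Z #>\<^bsub>?W\<^esub> c = ?Z #>\<^bsub>?W\<^esub> k" by auto
          have kc: "k \<in> carrier ?W" using k Kc_sub by blast
          have "c = k" using k(2) unfolding Z1 using triv_rcos[OF W.is_group cc] triv_rcos[OF W.is_group kc] by simp
          have "y \<otimes>\<^bsub>?W\<^esub> x \<otimes>\<^bsub>?W\<^esub> c = x \<otimes>\<^bsub>?W\<^esub> y"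
            unfolding c_def by (rule W.commutator_split[OF x y])
          then have e1: "x \<otimes>\<^bsub>?W\<^esub> y = y \<otimes>\<^bsub>?W\<^esub> x \<otimes>\<^bsub>?W\<^esub> k"
            using \<open>c = k\<close> by (simp only:)
          have xc': "(f,a) \<in> carrier ?W" using x xe by (simp only:)
          have a': "a \<noteq> 0" using a xe by simp
          have "x \<otimes>\<^bsub>?W\<^esub> y \<noteq> y \<otimes>\<^bsub>?W\<^esub> x \<otimes>\<^bsub>?W\<^esub> k"
            unfolding xe y_def by (rule W_noncomm[OF p p2 xc' a' k(1)])
          then show False using e1 by blast
        qed
        have "\<forall>z\<in>N. z [^]\<^bsub>?Q\<^esub> ?e = \<one>\<^bsub>?Q\<^esub>"
        proof
          fix z assume z: "z \<in> N"
          then obtain x where x: "x \<in> carrier ?W" "z = ?Z #>\<^bsub>?W\<^esub> x"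
            using Nc Zn.q_surj by blast
          obtain f a where xe: "x = (f,a)" by (cases x)
          have a0: "a = 0" using zero[OF z x(1) x(2)] xe by simp
          have "x [^]\<^bsub>?W\<^esub> p = \<one>\<^bsub>?W\<^esub>" using W_pow_zero[OF p0, of f] x(1) xe a0 by simp
          then show "z [^]\<^bsub>?Q\<^esub> ?e = \<one>\<^bsub>?Q\<^esub>"
            using x Zn.q_pow p2 Zn.q_trivial[OF subgroup.one_closed[OF Zn.subgroup_axioms]] by simp
        qed
        then show ?thesis by (rule Q.pe_central[OF pe])
      qed
    qed
  qed
  show ?thesis
  proof
    fix i show "eta_series p ?W i = upper_central ?W i"
    proof (induction i)
      case 0 then show ?case by simp
    next
      case (Suc i) then show ?case by (simp only: eta_series.simps upper_central.simps etaZ)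
    qed
  qed
qed

end
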